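(* Let $\varepsilon\in(0,1)$. Given a parameter $C\le\frac{1}{4\varepsilon}$ for the number of coordinates with frequency more than $1$, and a stream whose number of distinct elements is at least $\Omega\left(\frac{1}{\varepsilon^2}\right)$, there exists a one-pass streaming algorithm that uses $O\left(\frac{C}{\varepsilon}\log n\right)$ bits of space and outputs a $(1+\varepsilon)$-approximation to the number of distinct elements in the stream with probability at least $0.98$.
   Context: Streaming model: a stream of insertions of items from the universe $[n]$, of length polynomially bounded in $n$, defines a frequency vector $f\in\mathbb{Z}_{\ge 0}^n$ ($f_i$ is the number of occurrences of $i$). The number of distinct elements is $F_0=|\{i:f_i\neq 0\}|$. The algorithm makes a single pass over the stream; a $(1+\varepsilon)$-approximation to $F_0$ is a value $\hat F$ with $(1-\varepsilon)F_0\le\hat F\le(1+\varepsilon)F_0$. *)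

theory Defs
  imports "HOL-Probability.Probability_Mass_Function"
begin

text \<open>A randomized one-pass streaming algorithm over the universe of items (naturals).
  Its memory state is a bit string; it may use fresh random bits at every step
  (so randomness it wants to keep, e.g. hash functions, must be stored in the state).\<close>
record stream_alg =
  alg_init :: "bool list pmf"
  alg_upd  :: "nat \<Rightarrow> bool list \<Rightarrow> bool list pmf"
  alg_out  :: "bool list \<Rightarrow> real"

definition alg_run :: "stream_alg \<Rightarrow> nat list \<Rightarrow> bool list pmf" where
  "alg_run A xs = fold (\<lambda>x p. bind_pmf p (alg_upd A x)) xs (alg_init A)"

definition uses_space :: "stream_alg \<Rightarrow> real \<Rightarrow> bool" where
  "uses_space A s \<longleftrightarrow>
     (\<forall>st\<in>set_pmf (alg_init A). real (length st) \<le> s) \<and>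
     (\<forall>x st. real (length st) \<le> s \<longrightarrow> (\<forall>st'\<in>set_pmf (alg_upd A x st). real (length st') \<le> s))"

definition freq :: "nat list \<Rightarrow> nat \<Rightarrow> nat" where
  "freq xs i = count_list xs i"

definition F0 :: "nat list \<Rightarrow> nat" where
  "F0 xs = card {i. freq xs i \<noteq> 0}"

definition num_heavy :: "nat list \<Rightarrow> nat" where
  "num_heavy xs = card {i. freq xs i > 1}"

definition success_prob :: "stream_alg \<Rightarrow> real \<Rightarrow> nat list \<Rightarrow> real" where
  "success_prob A eps xs =
     measure_pmf.prob (alg_run A xs)
       {st. (1 - eps) * real (F0 xs) \<le> alg_out A st \<and> alg_out A st \<le> (1 + eps) * real (F0 xs)}"

end

theory Submission
  imports Defs "HOL-Library.Log_Nat"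
begin

definition mg_step :: "nat \<Rightarrow> nat \<Rightarrow> (nat \<Rightarrow> nat) \<times> nat \<Rightarrow> (nat \<Rightarrow> nat) \<times> nat" where
  "mg_step m x \<sigma> = (if 0 < fst \<sigma> x \<or> card {i. 0 < fst \<sigma> i} < m
      then ((fst \<sigma>)(x := Suc (fst \<sigma> x)), snd \<sigma>)
      else ((\<lambda>i. fst \<sigma> i - 1), Suc (snd \<sigma>)))"

definition mg :: "nat \<Rightarrow> nat list \<Rightarrow> (nat \<Rightarrow> nat) \<times> nat" where
  "mg m xs = fold (mg_step m) xs ((\<lambda>_. 0), 0)"

lemma mg_inv:
  "{i. 0 < fst (mg m xs) i} \<subseteq> set xs \<and> card {i. 0 < fst (mg m xs) i} \<le> m \<and>
   (\<forall>i. fst (mg m xs) i \<le> count_list xs i) \<and>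
   (\<forall>i. count_list xs i \<le> fst (mg m xs) i + snd (mg m xs)) \<and>
   sum (fst (mg m xs)) (set xs) + (m+1) * snd (mg m xs) = length xs"
proof (induction xs rule: rev_induct)
  case Nil
  then show ?case by (simp add: mg_def)
next
  case (snoc x xs)
  obtain T D where TD: "mg m xs = (T, D)" by fastforce
  have e: "mg m (xs @ [x]) = mg_step m x (T, D)" using TD by (simp add: mg_def)
  have S: "{i. 0 < T i} \<subseteq> set xs" and c: "card {i. 0 < T i} \<le> m"
    and le: "\<And>i. T i \<le> count_list xs i" and ge: "\<And>i. count_list xs i \<le> T i + D"
    and sm: "sum T (set xs) + (m+1) * D = length xs"
    using snoc TD by auto
  have fin: "finite {i. 0 < T i}" using S finite_subset by blast
  show ?case
  proof (cases "0 < T x \<or> card {i. 0 < T i} < m")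
    case True
    then have e2: "mg m (xs @ [x]) = (T(x := Suc (T x)), D)" using e by (simp add: mg_step_def)
    have sup: "{i. 0 < (T(x := Suc (T x))) i} = insert x {i. 0 < T i}" by auto
    have s1: "{i. 0 < (T(x := Suc (T x))) i} \<subseteq> set (xs @ [x])" using sup S by auto
    have s2: "card {i. 0 < (T(x := Suc (T x))) i} \<le> m"
      using True c fin unfolding sup by (cases "x \<in> {i. 0 < T i}") (auto simp: insert_absorb)
    have s3: "\<forall>i. (T(x := Suc (T x))) i \<le> count_list (xs@[x]) i" using le by auto
    have s4: "\<forall>i. count_list (xs@[x]) i \<le> (T(x := Suc (T x))) i + D" using ge by auto
    have s5: "sum (T(x := Suc (T x))) (set (xs@[x])) + (m+1) * D = length (xs@[x])"
    proof (cases "x \<in> set xs")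
      case True
      then have "set (xs@[x]) = set xs" by auto
      then show ?thesis using True sm by (simp add: sum.remove[of "set xs" x] sum_Suc)
    next
      case False
      then have "T x = 0" using S by auto
      have "sum (T(x := Suc (T x))) (set xs) = sum T (set xs)"
        using False by (intro sum.cong) auto
      then show ?thesis using False sm \<open>T x = 0\<close> by simp
    qed
    show ?thesis unfolding e2 using s1 s2 s3 s4 s5 by simp
  next
    case False
    then have e2: "mg m (xs @ [x]) = ((\<lambda>i. T i - 1), Suc D)" using e by (simp add: mg_step_def)
    have Tx: "T x = 0" and cm: "card {i. 0 < T i} = m" using False c by auto
    have s1: "{i. 0 < T i - 1} \<subseteq> set (xs @ [x])" using S by force
    have "{i. 0 < T i - 1} \<subseteq> {i. 0 < T i}" by auto
    then have s2: "card {i. 0 < T i - 1} \<le> m" using cm fin card_mono by metis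
    have s3: "\<forall>i. T i - 1 \<le> count_list (xs@[x]) i" proof
      fix i show "T i - 1 \<le> count_list (xs@[x]) i" using le[of i] by simp
    qed
    have s4: "\<forall>i. count_list (xs@[x]) i \<le> (T i - 1) + Suc D" proof
      fix i show "count_list (xs@[x]) i \<le> (T i - 1) + Suc D" using ge[of i] Tx by (cases "i = x") auto
    qed
    let ?S = "set (xs@[x])"
    have "sum T ?S = sum T (set xs)" using Tx
      by (cases "x \<in> set xs") (auto simp: insert_absorb)
    have "sum T ?S = sum (\<lambda>i. T i - 1) ?S + sum (\<lambda>i. if 0 < T i then 1 else 0) ?S"
      by (subst sum.distrib[symmetric]) (rule sum.cong, auto)
    moreover have "sum (\<lambda>i. if 0 < T i then 1 else 0::nat) ?S = card (?S \<inter> {i. 0 < T i})"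
      by (simp add: sum.If_cases)
    moreover have "?S \<inter> {i. 0 < T i} = {i. 0 < T i}" using S by auto
    ultimately have "sum T ?S = sum (\<lambda>i. T i - 1) ?S + m" using cm by simp
    then have s5: "sum (\<lambda>i. T i - 1) ?S + (m+1) * Suc D = length (xs@[x])"
      using sm \<open>sum T ?S = sum T (set xs)\<close> by simp
    show ?thesis unfolding e2 using s1 s2 s3 s4 s5 by simp
  qed
qed

lemma mg_est:
  fixes eps :: real
  assumes eps: "0 < eps" and hC: "num_heavy xs \<le> C" and mC: "real C + real C / eps \<le> real m"
    and TD: "mg m xs = (T, D)"
  shows "real (F0 xs) \<le> real (length xs) - (\<Sum>i\<in>set xs. real (T i - 1))
    \<and> real (length xs) - (\<Sum>i\<in>set xs. real (T i - 1)) \<le> (1 + eps) * real (F0 xs)"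
proof -
  let ?F = "set xs" and ?f = "count_list xs"
  define H where "H = {i. ?f i > 1}"
  have HF: "H \<subseteq> ?F" unfolding H_def by (smt (verit) count_list_0_iff mem_Collect_eq not_less_zero subsetI)
  have finH: "finite H" using HF finite_subset by blast
  have F0: "F0 xs = card ?F" unfolding F0_def freq_def using count_list_0_iff
    by (metis (mono_tags, lifting) Collect_cong List.finite_set Collect_mem_eq)
  have h: "card H \<le> C" using hC unfolding num_heavy_def freq_def H_def by simp
  have inv: "\<And>i. T i \<le> ?f i" "\<And>i. ?f i \<le> T i + D"
    "sum T ?F + (m+1) * D = length xs" using mg_inv[of m xs] TD by auto
  have L: "length xs = sum ?f ?F" using sum_count_set[of xs ?F] by simp
  have pos: "\<And>i. i \<in> ?F \<Longrightarrow> ?f i \<ge> 1" using count_list_0_iff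
    by (metis less_one not_less)
  have Lr: "real (length xs) = (\<Sum>i\<in>?F. real (?f i - 1)) + real (card ?F)"
  proof -
    have "(\<Sum>i\<in>?F. real (?f i - 1)) + real (card ?F) = (\<Sum>i\<in>?F. real (?f i - 1) + 1)"
      by (simp add: sum.distrib)
    also have "\<dots> = (\<Sum>i\<in>?F. real (?f i))" using pos by (intro sum.cong) (auto simp: of_nat_diff)
    finally show ?thesis using L by simp
  qed
  have lo: "\<And>i. real (T i - 1) \<le> real (?f i - 1)" using inv(1) by (simp add: diff_le_mono)
  have up: "\<And>i. i \<in> ?F \<Longrightarrow> real (?f i - 1) \<le> real (T i - 1) + (if i \<in> H then real D else 0)"
  proof -
    fix i assume "i \<in> ?F"
    show "real (?f i - 1) \<le> real (T i - 1) + (if i \<in> H then real D else 0)"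
    proof (cases "i \<in> H")
      case True then show ?thesis using inv(2)[of i] by simp
    next
      case False then have "?f i - 1 = 0" unfolding H_def by simp
      then show ?thesis by simp
    qed
  qed
  have s1: "(\<Sum>i\<in>?F. real (T i - 1)) \<le> (\<Sum>i\<in>?F. real (?f i - 1))"
    by (rule sum_mono) (rule lo)
  have s2: "(\<Sum>i\<in>?F. real (?f i - 1)) \<le> (\<Sum>i\<in>?F. real (T i - 1)) + real (card H) * real D"
  proof -
    have "(\<Sum>i\<in>?F. real (?f i - 1)) \<le> (\<Sum>i\<in>?F. real (T i - 1) + (if i \<in> H then real D else 0))"
      by (rule sum_mono) (rule up)
    also have "\<dots> = (\<Sum>i\<in>?F. real (T i - 1)) + real (card H) * real D"
      using HF by (simp add: sum.distrib sum.If_cases Int_absorb1)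
    finally show ?thesis .
  qed
  have Dle: "(real m + 1 - real (card H)) * real D \<le> real (card ?F)"
  proof -
    have a: "real (length xs) = (\<Sum>i\<in>?F. real (T i)) + (real m + 1) * real D"
      using inv(3) by (metis of_nat_add of_nat_mult of_nat_sum of_nat_Suc add.commute Suc_eq_plus1)
    have b: "(\<Sum>i\<in>H. real (T i)) \<le> (\<Sum>i\<in>?F. real (T i))"
      using HF by (intro sum_mono2) auto
    have c: "(\<Sum>i\<in>H. real (?f i)) - real (card H) * real D \<le> (\<Sum>i\<in>H. real (T i))"
    proof -
      have "(\<Sum>i\<in>H. real (?f i) - real D) \<le> (\<Sum>i\<in>H. real (T i))"
        using inv(2) by (intro sum_mono) (metis diff_le_eq of_nat_add of_nat_le_iff)
      then show ?thesis by (simp add: sum_subtractf)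
    qed
    have d: "real (length xs) = (\<Sum>i\<in>H. real (?f i)) + (real (card ?F) - real (card H))"
    proof -
      have "real (length xs) = (\<Sum>i\<in>?F. real (?f i))" using L by simp
      also have "\<dots> = (\<Sum>i\<in>H. real (?f i)) + (\<Sum>i\<in>?F - H. real (?f i))"
        using HF by (simp add: sum.subset_diff)
      also have "(\<Sum>i\<in>?F - H. real (?f i)) = (\<Sum>i\<in>?F - H. 1)"
      proof (rule sum.cong)
        fix i assume "i \<in> ?F - H"
        then have "?f i = 1" using pos[of i] unfolding H_def by auto
        then show "real (?f i) = 1" by simp
      qed simp
      also have "\<dots> = real (card ?F) - real (card H)" using HF finH
        by (simp add: card_Diff_subset of_nat_diff card_mono)
      finally show ?thesis .
    qed
    from a b c d show ?thesis by (simp add: algebra_simps)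
  qed
  have hD: "real (card H) * real D \<le> eps * real (card ?F)"
  proof -
    have "real (card H) \<le> eps * (real m + 1 - real (card H))"
    proof -
      have "real C \<le> eps * (real C / eps)" using eps by simp
      moreover have "real C / eps \<le> real m + 1 - real (card H)" using mC h by linarith
      ultimately have "real C \<le> eps * (real m + 1 - real (card H))"
        using eps by (smt (verit) mult_left_mono)
      then show ?thesis using h by linarith
    qed
    then have "real (card H) * real D \<le> eps * ((real m + 1 - real (card H)) * real D)"
      by (metis mult.assoc mult_right_mono of_nat_0_le_iff)
    also have "\<dots> \<le> eps * real (card ?F)" using Dle eps by simp
    finally show ?thesis .
  qed
  show ?thesis using s1 s2 hD Lr F0 by (simp add: algebra_simps)
qed


fun tb :: "nat \<Rightarrow> nat \<Rightarrow> bool list" where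
  "tb 0 x = []"
| "tb (Suc w) x = odd x # tb w (x div 2)"

fun fb :: "bool list \<Rightarrow> nat" where
  "fb [] = 0"
| "fb (b # bs) = (if b then 1 else 0) + 2 * fb bs"

lemma length_tb[simp]: "length (tb w x) = w"
  by (induction w arbitrary: x) auto

lemma fb_tb: "fb (tb w x) = x mod 2 ^ w"
proof (induction w arbitrary: x)
  case 0 then show ?case by simp
next
  case (Suc w)
  then show ?case by (simp add: mod_mult2_eq) presburger
qed

primrec decn :: "nat \<Rightarrow> nat \<Rightarrow> bool list \<Rightarrow> nat list" where
  "decn w 0 bs = []"
| "decn w (Suc r) bs = fb (take w bs) # decn w r (drop w bs)"

definition encl :: "nat \<Rightarrow> nat list \<Rightarrow> bool list" where
  "encl w xs = concat (map (tb w) xs)"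

lemma length_encl[simp]: "length (encl w xs) = w * length xs"
  unfolding encl_def by (induction xs) auto

lemma decn_encl: "decn w (length xs) (encl w xs) = map (\<lambda>x. x mod 2 ^ w) xs"
  unfolding encl_def by (induction xs) (auto simp: fb_tb)

fun pairs :: "nat list \<Rightarrow> (nat \<times> nat) list" where
  "pairs (a # b # r) = (a, b) # pairs r"
| "pairs _ = []"

lemma pairs_concat: "pairs (concat (map (\<lambda>i. [i, T i]) K)) = map (\<lambda>i. (i, T i)) K"
  by (induction K) auto

definition st_list :: "nat \<Rightarrow> nat \<times> (nat \<Rightarrow> nat) \<Rightarrow> nat list" where
  "st_list m \<sigma> = fst \<sigma> # concat (map (\<lambda>i. [i, snd \<sigma> i]) (take m (sorted_list_of_set {i. 0 < snd \<sigma> i})))"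

definition enc :: "nat \<Rightarrow> nat \<Rightarrow> nat \<times> (nat \<Rightarrow> nat) \<Rightarrow> bool list" where
  "enc w m \<sigma> = encl w (st_list m \<sigma>)"

definition dec :: "nat \<Rightarrow> bool list \<Rightarrow> nat \<times> (nat \<Rightarrow> nat)" where
  "dec w bs = (let ns = decn w (length bs div w) bs in
     (hd ns, (\<lambda>i. case map_of (pairs (tl ns)) i of None \<Rightarrow> 0 | Some c \<Rightarrow> c)))"

lemma length_st_list: "length (st_list m \<sigma>) \<le> 1 + 2 * m"
proof -
  have "\<And>K. length (concat (map (\<lambda>i. [i, snd \<sigma> i]) K)) = 2 * length K"
    subgoal for K by (induction K) auto done
  then show ?thesis unfolding st_list_def by simp
qed

lemma length_enc: "length (enc w m \<sigma>) \<le> w * (1 + 2 * m)"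
  unfolding enc_def using mult_le_mono2[OF length_st_list[of m \<sigma>], of w] by simp

lemma dec_enc:
  assumes w: "0 < w" and fin: "finite {i. 0 < T i}" and c: "card {i. 0 < T i} \<le> m"
    and L: "L < 2 ^ w" and keys: "\<forall>i. 0 < T i \<longrightarrow> i < 2 ^ w" and vals: "\<forall>i. T i < 2 ^ w"
  shows "dec w (enc w m (L, T)) = (L, T)"
proof -
  let ?K = "sorted_list_of_set {i. 0 < T i}"
  have tk: "take m ?K = ?K" using c fin by simp
  have sl: "st_list m (L, T) = L # concat (map (\<lambda>i. [i, T i]) ?K)"
    unfolding st_list_def using tk by simp
  have len: "length (enc w m (L, T)) div w = length (st_list m (L, T))"
    unfolding enc_def using w by simp
  have small: "\<forall>x\<in>set (st_list m (L, T)). x < 2 ^ w"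
    unfolding sl using L keys vals fin by auto
  have ns: "decn w (length (enc w m (L, T)) div w) (enc w m (L, T)) = st_list m (L, T)"
    unfolding len unfolding enc_def decn_encl using small by (simp add: map_idI)
  have T: "(\<lambda>i. case map_of (map (\<lambda>i. (i, T i)) ?K) i of None \<Rightarrow> 0 | Some c \<Rightarrow> c) = T"
  proof
    fix i
    show "(case map_of (map (\<lambda>i. (i, T i)) ?K) i of None \<Rightarrow> 0 | Some c \<Rightarrow> c) = T i"
      using fin by (auto simp: map_of_map_restrict restrict_map_def)
  qed
  show ?thesis unfolding dec_def Let_def ns unfolding sl using T by (simp add: pairs_concat)
qed


definition gstep :: "nat \<Rightarrow> nat \<Rightarrow> nat \<Rightarrow> bool list \<Rightarrow> bool list" where
  "gstep w m x bs = enc w m (Suc (fst (dec w bs)), fst (mg_step m x (snd (dec w bs), 0)))"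

definition outf :: "nat \<times> (nat \<Rightarrow> nat) \<Rightarrow> real" where
  "outf \<sigma> = real (fst \<sigma>) - (\<Sum>i\<in>{i. 0 < snd \<sigma> i}. real (snd \<sigma> i - 1))"

definition alg :: "nat \<Rightarrow> nat \<Rightarrow> stream_alg" where
  "alg w m = \<lparr>alg_init = return_pmf (enc w m (0, \<lambda>_. 0)),
     alg_upd = (\<lambda>x bs. return_pmf (gstep w m x bs)), alg_out = (\<lambda>bs. outf (dec w bs))\<rparr>"

lemma fold_return:
  "fold (\<lambda>x p. bind_pmf p (\<lambda>bs. return_pmf (g x bs))) xs (return_pmf s) = return_pmf (fold g xs s)"
  by (induction xs arbitrary: s) (auto simp: bind_return_pmf)

lemma run_alg: "alg_run (alg w m) xs = return_pmf (fold (gstep w m) xs (enc w m (0, \<lambda>_. 0)))"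
  unfolding alg_run_def alg_def using fold_return[of "gstep w m"] by simp

lemma fst_mg_step: "fst (mg_step m x (T, D)) = fst (mg_step m x (T, 0))"
  unfolding mg_step_def by simp

lemma count_le_length: "count_list xs i \<le> length xs"
  by (simp add: count_list_eq_length_filter)

lemma fold_correct:
  assumes w: "0 < w" and len: "length xs < 2 ^ w" and el: "\<forall>x\<in>set xs. x < 2 ^ w"
  shows "fold (gstep w m) xs (enc w m (0, \<lambda>_. 0)) = enc w m (length xs, fst (mg m xs))"
  using len el
proof (induction xs rule: rev_induct)
  case Nil
  then show ?case by (simp add: mg_def)
next
  case (snoc x xs)
  obtain T D where TD: "mg m xs = (T, D)" by fastforce
  have inv: "{i. 0 < T i} \<subseteq> set xs" "card {i. 0 < T i} \<le> m" "\<And>i. T i \<le> count_list xs i"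
    using mg_inv[of m xs] TD by auto
  have fin: "finite {i. 0 < T i}" using inv(1) finite_subset by blast
  have L: "length xs < 2 ^ w" using snoc.prems by simp
  have keys: "\<forall>i. 0 < T i \<longrightarrow> i < 2 ^ w" using inv(1) snoc.prems(2) by auto
  have vals: "\<forall>i. T i < 2 ^ w" using inv(3) count_le_length L le_less_trans by metis
  have IH: "fold (gstep w m) xs (enc w m (0, \<lambda>_. 0)) = enc w m (length xs, T)"
    using snoc TD by simp
  have d: "dec w (enc w m (length xs, T)) = (length xs, T)"
    using dec_enc[OF w fin inv(2) L keys vals] .
  have "mg m (xs @ [x]) = mg_step m x (T, D)" using TD by (simp add: mg_def)
  then have "fst (mg m (xs @ [x])) = fst (mg_step m x (T, 0))" using fst_mg_step by metis
  then have eq: "fst (mg m (xs @ [x])) = fst (mg_step m x (T, 0))" .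
  have "fold (gstep w m) (xs@[x]) (enc w m (0, \<lambda>_. 0))
      = gstep w m x (fold (gstep w m) xs (enc w m (0, \<lambda>_. 0)))" by simp
  also have "\<dots> = gstep w m x (enc w m (length xs, T))" using IH by simp
  also have "\<dots> = enc w m (Suc (length xs), fst (mg_step m x (T, 0)))"
    unfolding gstep_def using d by simp
  finally show ?case using eq by simp
qed

lemma outf_mg:
  assumes "mg m xs = (T, D)"
  shows "outf (length xs, T) = real (length xs) - (\<Sum>i\<in>set xs. real (T i - 1))"
proof -
  have S: "{i. 0 < T i} \<subseteq> set xs" using mg_inv[of m xs] assms by auto
  have "(\<Sum>i\<in>{i. 0 < T i}. real (T i - 1)) = (\<Sum>i\<in>set xs. real (T i - 1))"
    using S by (intro sum.mono_neutral_left) auto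
  then show ?thesis unfolding outf_def by simp
qed


lemma floorlog_ln: assumes "2 \<le> n" shows "real (floorlog 2 n) \<le> 4 * ln (real n)"
proof -
  have l1: "1 \<le> log 2 (real n)" using assms by simp
  have "real (floorlog 2 n) = real (nat \<lfloor>log 2 (real n)\<rfloor>) + 1"
    using assms by (simp add: floorlog_def)
  also have "\<dots> \<le> log 2 (real n) + 1" using l1 by linarith
  also have "\<dots> \<le> 2 * log 2 (real n)" using l1 by simp
  also have "\<dots> = 2 * (ln (real n) / ln 2)" by (simp add: log_def)
  also have "\<dots> \<le> 4 * ln (real n)"
  proof -
    have h: "1/2 < ln (2::real)" by (smt (verit) ln_add1_gt)
    have "0 \<le> ln (real n)" using assms by simp
    then have "ln (real n) / ln 2 \<le> ln (real n) / (1/2)"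
      using h by (intro divide_left_mono) auto
    then show ?thesis by simp
  qed
  finally show ?thesis .
qed

lemma space_bound:
  fixes eps :: real
  assumes n: "2 \<le> n" and eps: "0 < eps" "eps < 1" and C: "1 \<le> C"
  shows "real ((k+1) * floorlog 2 n * (1 + 2 * (C + nat \<lceil>real C / eps\<rceil>)))
     \<le> (28 * (real k + 1)) * (real C / eps) * ln (real n)"
proof -
  have Ce: "real C \<le> real C / eps" using eps C by (simp add: le_divide_eq)
  have one: "1 \<le> real C / eps" using Ce C by linarith
  have "real (nat \<lceil>real C / eps\<rceil>) \<le> real C / eps + 1" using one by linarith
  moreover have "real (1 + 2 * (C + nat \<lceil>real C / eps\<rceil>)) = 1 + 2 * real C + 2 * real (nat \<lceil>real C / eps\<rceil>)"
    by simp
  ultimately have m: "real (1 + 2 * (C + nat \<lceil>real C / eps\<rceil>)) \<le> 7 * (real C / eps)"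
    using Ce one by linarith
  have b: "real (floorlog 2 n) \<le> 4 * ln (real n)" using floorlog_ln n by blast
  have "real ((k+1) * floorlog 2 n * (1 + 2 * (C + nat \<lceil>real C / eps\<rceil>)))
     = (real k + 1) * real (floorlog 2 n) * real (1 + 2 * (C + nat \<lceil>real C / eps\<rceil>))"
    by (simp add: algebra_simps)
  also have "\<dots> \<le> (real k + 1) * (4 * ln (real n)) * (7 * (real C / eps))"
    using b m by (intro mult_mono) auto
  also have "\<dots> = (28 * (real k + 1)) * (real C / eps) * ln (real n)" by simp
  finally show ?thesis .
qed

theorem theorem5p6:
  fixes k :: nat
  shows "\<exists>c0 c1 :: real. c0 > 0 \<and> c1 > 0 \<and>
    (\<forall>(n::nat) (eps::real) (C::nat).
       n \<ge> 2 \<longrightarrow> 0 < eps \<longrightarrow> eps < 1 \<longrightarrow> 1 \<le> C \<longrightarrow> real C \<le> 1 / (4 * eps) \<longrightarrow>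
       (\<exists>A. uses_space A (c1 * (real C / eps) * ln (real n)) \<and>
          (\<forall>xs. set xs \<subseteq> {..<n} \<longrightarrow> length xs \<le> n ^ k \<longrightarrow>
                num_heavy xs \<le> C \<longrightarrow> real (F0 xs) \<ge> c0 / eps\<^sup>2 \<longrightarrow>
                success_prob A eps xs \<ge> 0.98)))"
proof (rule exI[of _ 1], rule exI[of _ "28 * (real k + 1)"], intro conjI allI impI)
  show "(1::real) > 0" by simp
  show "28 * (real k + 1) > (0::real)" by simp
  fix n :: nat and eps :: real and C :: nat
  assume n: "2 \<le> n" and e0: "0 < eps" and e1: "eps < 1" and C: "1 \<le> C"
  define m where "m = C + nat \<lceil>real C / eps\<rceil>"
  define w where "w = (k+1) * floorlog 2 n"
  let ?s = "28 * (real k + 1) * (real C / eps) * ln (real n)"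
  have sb: "\<And>\<sigma>. real (length (enc w m \<sigma>)) \<le> ?s"
  proof -
    fix \<sigma>
    have "length (enc w m \<sigma>) \<le> w * (1 + 2 * m)" by (rule length_enc)
    then have "real (length (enc w m \<sigma>)) \<le> real (w * (1 + 2 * m))" by linarith
    also have "\<dots> \<le> ?s" unfolding w_def m_def using space_bound[OF n e0 e1 C, of k] by simp
    finally show "real (length (enc w m \<sigma>)) \<le> ?s" .
  qed
  have bnd: "n < 2 ^ floorlog 2 n" using floorlog_bounds[of n 2] n by simp
  then have b0: "0 < floorlog 2 n" using n by (cases "floorlog 2 n") auto
  have w0: "0 < w" unfolding w_def using b0 by simp
  have nw: "n ^ (k+1) < 2 ^ w"
  proof -
    have "n ^ (k+1) < (2 ^ floorlog 2 n) ^ (k+1)" using bnd by (intro power_strict_mono) auto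
    moreover have "(2::nat) ^ w = (2 ^ floorlog 2 n) ^ (k+1)"
      unfolding w_def by (metis power_mult mult.commute)
    ultimately show ?thesis by simp
  qed
  have nk: "n ^ k \<le> n ^ (k+1)" using n by (intro power_increasing) auto
  have n1: "n \<le> n ^ (k+1)" using n by (metis Suc_eq_plus1 le_add2 power_increasing power_one_right
        less_le_trans pos2 zero_less_Suc numeral_2_eq_2 less_imp_le_nat le_eq_less_or_eq order.trans one_le_numeral)
  show "\<exists>A. uses_space A ?s \<and>
          (\<forall>xs. set xs \<subseteq> {..<n} \<longrightarrow> length xs \<le> n ^ k \<longrightarrow>
                num_heavy xs \<le> C \<longrightarrow> real (F0 xs) \<ge> 1 / eps\<^sup>2 \<longrightarrow>
                success_prob A eps xs \<ge> 0.98)"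
  proof (intro exI[of _ "alg w m"] conjI allI impI)
    show "uses_space (alg w m) ?s"
      unfolding uses_space_def alg_def using sb by (auto simp: gstep_def)
    fix xs :: "nat list"
    assume xs: "set xs \<subseteq> {..<n}" and lx: "length xs \<le> n ^ k" and h: "num_heavy xs \<le> C"
      and "1 / eps\<^sup>2 \<le> real (F0 xs)"
    have len: "length xs < 2 ^ w" using lx nk nw by linarith
    have el: "\<forall>x\<in>set xs. x < 2 ^ w"
    proof
      fix x assume "x \<in> set xs"
      then have "x < n" using xs by auto
      then show "x < 2 ^ w" using n1 nw by linarith
    qed
    obtain T D where TD: "mg m xs = (T, D)" by fastforce
    have run: "alg_run (alg w m) xs = return_pmf (enc w m (length xs, T))"
      using run_alg fold_correct[OF w0 len el] TD by simp
    have inv: "{i. 0 < T i} \<subseteq> set xs" "card {i. 0 < T i} \<le> m" "\<And>i. T i \<le> count_list xs i"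
      using mg_inv[of m xs] TD by auto
    have fin: "finite {i. 0 < T i}" using inv(1) finite_subset by blast
    have keys: "\<forall>i. 0 < T i \<longrightarrow> i < 2 ^ w" using inv(1) el by auto
    have vals: "\<forall>i. T i < 2 ^ w" using inv(3) count_le_length len le_less_trans by metis
    have d: "dec w (enc w m (length xs, T)) = (length xs, T)"
      using dec_enc[OF w0 fin inv(2) len keys vals] .
    have mC: "real C + real C / eps \<le> real m" unfolding m_def by simp linarith
    note est = mg_est[OF e0 h mC TD]
    have o: "alg_out (alg w m) (enc w m (length xs, T)) = real (length xs) - (\<Sum>i\<in>set xs. real (T i - 1))"
      using d outf_mg[OF TD] by (simp add: alg_def)
    show "success_prob (alg w m) eps xs \<ge> 0.98"
    proof -
      have "(1 - eps) * real (F0 xs) \<le> real (F0 xs)" using e0 by (simp add: algebra_simps)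
      then have "enc w m (length xs, T) \<in> {st. (1 - eps) * real (F0 xs) \<le> alg_out (alg w m) st \<and>
          alg_out (alg w m) st \<le> (1 + eps) * real (F0 xs)}" using est o by simp
      then show "success_prob (alg w m) eps xs \<ge> 0.98" unfolding success_prob_def run by simp
    qed
  qed
qed


end
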